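(* Let $N$ be a unary nfa in Chrobak normal form accepting the language $L\subseteq\{a\}^*$. Then $\mathrm{nsyn}(L)\le|N|$, the number of states of $N$.
   Context: A unary nfa is in Chrobak normal form if it has a single initial state $q_0$, its states consist of a path $q_0\xrightarrow{a}q_1\xrightarrow{a}\cdots\xrightarrow{a}q_m$ together with pairwise disjoint cycles $p_{i,0}\xrightarrow{a}p_{i,1}\xrightarrow{a}\cdots\xrightarrow{a}p_{i,\ell_i-1}\xrightarrow{a}p_{i,0}$ ($i=1,\ldots,k$), and the only further transitions are $q_m\xrightarrow{a}p_{i,0}$ for each $i$ (so $q_m$ is the only state that may have several successors); final states are arbitrary. $\mathrm{nsyn}(L)$ is the least number of states of a subatomic nfa accepting $L$, i.e. an nfa (several initial states allowed) all of whose states accept languages in the boolean algebra generated by the two-sided derivatives $u^{-1}Lv^{-1}=\{w:uwv\in L\}$. *)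

theory Defs
  imports Main
begin

text \<open>Nondeterministic finite automata with several initial states, over an
alphabet given by the type 'c; words are lists. A unary alphabet is the type unit.\<close>

record ('s, 'c) nfa =
  states :: "'s set"
  init   :: "'s set"
  trans  :: "'s \<Rightarrow> 'c \<Rightarrow> 's set"
  final  :: "'s set"

definition wf_nfa :: "('s, 'c) nfa \<Rightarrow> bool" where
  "wf_nfa N \<longleftrightarrow> finite (states N) \<and> init N \<subseteq> states N \<and> final N \<subseteq> states N \<and>
     (\<forall>q\<in>states N. \<forall>c. trans N q c \<subseteq> states N)"

fun reach :: "('s, 'c) nfa \<Rightarrow> 's \<Rightarrow> 'c list \<Rightarrow> 's set" where
  "reach N q [] = {q}"
| "reach N q (c # w) = (\<Union>p\<in>trans N q c. reach N p w)"

definition state_lang :: "('s, 'c) nfa \<Rightarrow> 's \<Rightarrow> 'c list set" where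
  "state_lang N q = {w. reach N q w \<inter> final N \<noteq> {}}"

definition lang :: "('s, 'c) nfa \<Rightarrow> 'c list set" where
  "lang N = (\<Union>q\<in>init N. state_lang N q)"

text \<open>The boolean algebra generated by the two-sided derivatives u^-1 L v^-1.\<close>
inductive_set deriv_algebra :: "'c list set \<Rightarrow> 'c list set set" for L where
  deriv: "{w. u @ w @ v \<in> L} \<in> deriv_algebra L"
| compl: "X \<in> deriv_algebra L \<Longrightarrow> - X \<in> deriv_algebra L"
| union: "X \<in> deriv_algebra L \<Longrightarrow> Y \<in> deriv_algebra L \<Longrightarrow> X \<union> Y \<in> deriv_algebra L"

definition subatomic :: "'c list set \<Rightarrow> ('s, 'c) nfa \<Rightarrow> bool" where
  "subatomic L N \<longleftrightarrow> wf_nfa N \<and> (\<forall>q\<in>states N. state_lang N q \<in> deriv_algebra L)"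

text \<open>Least number of states of a subatomic nfa accepting L (state names taken
from nat, which is no restriction for finite automata).\<close>
definition nsyn :: "'c list set \<Rightarrow> nat" where
  "nsyn L = (LEAST n. \<exists>N :: (nat, 'c) nfa. subatomic L N \<and> lang N = L \<and> card (states N) = n)"

text \<open>Chrobak normal form of a unary nfa: a path q_0 -> ... -> q_m followed by
disjoint cycles of lengths l_i (i < k), with q_m -> p_{i,0} for each i.\<close>
definition chrobak_nf :: "('s, unit) nfa \<Rightarrow> bool" where
  "chrobak_nf N \<longleftrightarrow> wf_nfa N \<and>
    (\<exists>(m::nat) (k::nat) (l::nat \<Rightarrow> nat) (q::nat \<Rightarrow> 's) (p::nat \<Rightarrow> nat \<Rightarrow> 's).
       (\<forall>i<k. l i \<ge> 1) \<and>
       inj_on q {0..m} \<and>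
       inj_on (\<lambda>(i, j). p i j) {(i, j). i < k \<and> j < l i} \<and>
       q ` {0..m} \<inter> (\<lambda>(i, j). p i j) ` {(i, j). i < k \<and> j < l i} = {} \<and>
       states N = q ` {0..m} \<union> (\<lambda>(i, j). p i j) ` {(i, j). i < k \<and> j < l i} \<and>
       init N = {q 0} \<and>
       (\<forall>j<m. trans N (q j) () = {q (Suc j)}) \<and>
       trans N (q m) () = {p i 0 | i. i < k} \<and>
       (\<forall>i<k. \<forall>j<l i. trans N (p i j) () = {p i (Suc j mod l i)}))"

end

theory Submission imports Defs begin

lemma reach_subset: "wf_nfa N \<Longrightarrow> s \<in> states N \<Longrightarrow> reach N s w \<subseteq> states N"
proof (induction w arbitrary: s)
  case Nil then show ?case by simp
next
  case (Cons c w)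
  show ?case proof
    fix x assume "x \<in> reach N s (c # w)"
    then obtain p where p: "p \<in> trans N s c" "x \<in> reach N p w" by auto
    have "p \<in> states N" using p(1) Cons.prems unfolding wf_nfa_def by blast
    then show "x \<in> states N" using Cons.IH[OF Cons.prems(1)] p(2) by blast
  qed
qed

lemma nsyn_le:
  fixes N :: "('s,'c) nfa"
  assumes sa: "subatomic L N" and lg: "lang N = L"
  shows "nsyn L \<le> card (states N)"
proof -
  have wf: "wf_nfa N" using sa unfolding subatomic_def by simp
  then have fin: "finite (states N)" unfolding wf_nfa_def by simp
  obtain f :: "'s \<Rightarrow> nat" where bf: "bij_betw f (states N) {0..<card (states N)}"
    using ex_bij_betw_finite_nat[OF fin] by blast
  have inj: "inj_on f (states N)" using bf bij_betw_def by blast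
  define M :: "(nat,'c) nfa" where "M = \<lparr>states = f ` states N, init = f ` init N,
     trans = (\<lambda>x c. f ` trans N (inv_into (states N) f x) c), final = f ` final N\<rparr>"
  have R: "reach M (f s) w = f ` reach N s w" if "s \<in> states N" for s w
    using that
  proof (induction w arbitrary: s)
    case Nil then show ?case by simp
  next
    case (Cons c w)
    have t: "trans N s c \<subseteq> states N" using wf Cons.prems unfolding wf_nfa_def by blast
    have "reach M (f s) (c # w) = (\<Union>p\<in>f ` trans N s c. reach M p w)"
      using Cons.prems inj by (simp add: M_def)
    also have "\<dots> = (\<Union>p\<in>trans N s c. reach M (f p) w)" by simp
    also have "\<dots> = (\<Union>p\<in>trans N s c. f ` reach N p w)"
      using Cons.IH t by blast
    finally show ?case by auto
  qed
  have SL: "state_lang M (f s) = state_lang N s" if "s \<in> states N" for s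
  proof -
    have "f ` reach N s w \<inter> f ` final N = f ` (reach N s w \<inter> final N)" for w
      using inj_on_image_Int[OF inj reach_subset[OF wf that]] wf unfolding wf_nfa_def by blast
    then show ?thesis using R[OF that] unfolding state_lang_def by (simp add: M_def)
  qed
  have "subatomic L M"
    unfolding subatomic_def
  proof
    show "wf_nfa M" using wf unfolding wf_nfa_def M_def by (auto simp: inv_into_f_f[OF inj]) blast+
    show "\<forall>q\<in>states M. state_lang M q \<in> deriv_algebra L"
      using sa SL unfolding subatomic_def by (auto simp: M_def)
  qed
  moreover have "lang M = L"
  proof -
    have "init N \<subseteq> states N" using wf unfolding wf_nfa_def by blast
    then have "lang M = (\<Union>s\<in>init N. state_lang N s)"
      unfolding lang_def using SL by (auto simp: M_def)
    then show ?thesis using lg unfolding lang_def by simp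
  qed
  moreover have "card (states M) = card (states N)"
    using card_image[OF inj] by (simp add: M_def)
  ultimately show ?thesis unfolding nsyn_def by (metis (mono_tags, lifting) Least_le)
qed

lemma reach_cong: "trans N' = trans N \<Longrightarrow> reach N' s w = reach N s w"
  by (induction w arbitrary: s) auto

lemma da_inter: "X \<in> deriv_algebra L \<Longrightarrow> Y \<in> deriv_algebra L \<Longrightarrow> X \<inter> Y \<in> deriv_algebra L"
proof -
  assume "X \<in> deriv_algebra L" "Y \<in> deriv_algebra L"
  then have "- (- X \<union> - Y) \<in> deriv_algebra L" by (intro deriv_algebra.intros)
  then show ?thesis by simp
qed

lemma da_UNIV: "UNIV \<in> deriv_algebra L"
proof -
  have "{w. [] @ w @ [] \<in> L} \<in> deriv_algebra L" by (rule deriv_algebra.deriv)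
  then have "{w. [] @ w @ [] \<in> L} \<union> - {w. [] @ w @ [] \<in> L} \<in> deriv_algebra L"
    by (intro deriv_algebra.intros)
  then show ?thesis by simp
qed

lemma da_INT: "(\<And>t. t < (K::nat) \<Longrightarrow> f t \<in> deriv_algebra L) \<Longrightarrow> (\<Inter>t\<in>{..<K}. f t) \<in> deriv_algebra L"
proof (induction K)
  case 0 then show ?case using da_UNIV by simp
next
  case (Suc K)
  have "(\<Inter>t\<in>{..<Suc K}. f t) = f K \<inter> (\<Inter>t\<in>{..<K}. f t)"
    by (simp add: lessThan_Suc)
  then show ?case using Suc da_inter[of "f K" L] by simp
qed


theorem mainTheorem16:
  fixes N :: "('s, unit) nfa" and L :: "unit list set"
  assumes "chrobak_nf N"
    and "lang N = L"
  shows "nsyn L \<le> card (states N)"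
proof -
  have wf: "wf_nfa N" using assms(1) unfolding chrobak_nf_def by blast
  obtain m k l q p where
    l1: "\<forall>i<k. l i \<ge> (1::nat)" and
    injq: "inj_on q {0..(m::nat)}" and
    injp: "inj_on (\<lambda>(i, j). p i j) {(i, j). i < (k::nat) \<and> j < l i}" and
    disj: "q ` {0..m} \<inter> (\<lambda>(i, j). p i j) ` {(i, j). i < k \<and> j < l i} = {}" and
    st: "states N = q ` {0..m} \<union> (\<lambda>(i, j). p i j) ` {(i, j). i < k \<and> j < l i}" and
    ini: "init N = {q 0}" and
    tq: "\<forall>j<m. trans N (q j) () = {q (Suc j)}" and
    tm: "trans N (q m) () = {p i 0 | i. i < k}" and
    tp: "\<forall>i<k. \<forall>j<l i. trans N (p i j) () = {p i (Suc j mod l i)}"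
    using assms(1) unfolding chrobak_nf_def by (elim conjE exE) (rule that; assumption)
  have R1: "reach N (p i j) w = {p i ((j + length w) mod l i)}" if "i < k" "j < l i" for i j w
    using that
  proof (induction w arbitrary: j)
    case Nil then show ?case by simp
  next
    case (Cons c w)
    have "Suc j mod l i < l i" using l1 Cons.prems by simp
    then have "reach N (p i j) (c # w) = {p i ((Suc j mod l i + length w) mod l i)}"
      using Cons tp by simp
    then show ?case by (simp add: mod_add_left_eq)
  qed
  have R2: "reach N (q j) w = (if j + length w \<le> m then {q (j + length w)}
       else {p i ((j + length w - Suc m) mod l i) | i. i < k})" if "j \<le> m" for j w
    using that
  proof (induction w arbitrary: j)
    case Nil then show ?case by simp
  next
    case (Cons c w)
    show ?case
    proof (cases "j < m")
      case True
      then have "reach N (q j) (c # w) = reach N (q (Suc j)) w" using tq by simp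
      then show ?thesis using Cons.IH[of "Suc j"] True by simp
    next
      case False
      then have jm: "j = m" using Cons.prems by simp
      have "reach N (q j) (c # w) = (\<Union>i\<in>{..<k}. reach N (p i 0) w)"
        using tm jm by auto
      also have "\<dots> = (\<Union>i\<in>{..<k}. {p i (length w mod l i)})"
        by (rule SUP_cong[OF refl]) (use R1 l1 in \<open>force simp: Suc_le_eq\<close>)
      finally show ?thesis using jm by auto
    qed
  qed
  define K where "K = (\<Prod>i<k. l i)"
  have Kpos: "K > 0" unfolding K_def using l1 by (simp add: Suc_le_eq)
  have dvdK: "l i dvd K" if "i < k" for i
    unfolding K_def using that by (simp add: dvd_prodI)
  define Pp where "Pp n = (\<exists>i<k. p i (n mod l i) \<in> final N)" for n
  have Pper: "Pp (a + c * K) = Pp a" for a c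
  proof -
    have "(a + c * K) mod l i = a mod l i" if ik: "i < k" for i
    proof -
      obtain e where e: "K = l i * e" using dvdK[OF ik] by (elim dvdE)
      have "a + c * K = a + l i * (c * e)" using e by simp
      then show ?thesis by (simp only: mod_mult_self2)
    qed
    then show ?thesis unfolding Pp_def by auto
  qed
  define D where "D i r = (\<forall>t. Pp (r + t * l i))" for i r
  have Dall: "D i r = (\<forall>t<K. Pp (r + t * l i))" for i r
  proof
    assume "\<forall>t<K. Pp (r + t * l i)"
    show "D i r" unfolding D_def
    proof
      fix t
      have e: "r + t * l i = (r + (t mod K) * l i) + ((t div K) * l i) * K"
        by (metis add.assoc mod_div_mult_eq mult.assoc mult.commute distrib_right)
      have "Pp (r + (t mod K) * l i)" using \<open>\<forall>t<K. _\<close> Kpos by simp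
      then show "Pp (r + t * l i)" using e Pper by metis
    qed
  qed (simp add: D_def)
  have Dmod: "D i r = D i (r mod l i)" for i r
  proof -
    obtain K0 where K0: "K = Suc K0" using Kpos gr0_implies_Suc by blast
    define d where "d = r div l i"
    define rm where "rm = r mod l i"
    have r: "r = rm + d * l i" unfolding d_def rm_def by simp
    show ?thesis unfolding D_def rm_def[symmetric]
    proof
      assume H: "\<forall>t. Pp (r + t * l i)"
      show "\<forall>t. Pp (rm + t * l i)"
      proof
        fix t
        have "r + (t + d * K0) * l i = (rm + t * l i) + (d * l i) * K"
          by (simp add: r K0 algebra_simps)
        then show "Pp (rm + t * l i)" using H Pper by metis
      qed
    next
      assume H: "\<forall>t. Pp (rm + t * l i)"
      show "\<forall>t. Pp (r + t * l i)"
      proof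
        fix t
        have "r + t * l i = rm + (d + t) * l i" by (simp add: r algebra_simps)
        then show "Pp (r + t * l i)" using H by metis
      qed
    qed
  qed
  have DP: "(\<exists>i<k. D i (n mod l i)) = Pp n" for n
  proof
    assume "\<exists>i<k. D i (n mod l i)"
    then obtain i where "i < k" "D i n" using Dmod by blast
    then show "Pp n" unfolding D_def by (metis add.right_neutral mult_zero_left)
  next
    assume "Pp n"
    then obtain i where i: "i < k" "p i (n mod l i) \<in> final N" unfolding Pp_def by blast
    have "D i n" unfolding D_def Pp_def using i by auto
    then show "\<exists>i<k. D i (n mod l i)" using i Dmod by blast
  qed
  define F' where "F' = q ` {j. j \<le> m \<and> q j \<in> final N} \<union> {p i r | i r. i < k \<and> r < l i \<and> D i r}"
  define N' where "N' = N\<lparr>final := F'\<rparr>"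
  have memq: "(q j \<in> F') = (q j \<in> final N)" if "j \<le> m" for j
  proof
    assume "q j \<in> F'"
    then consider j' where "j' \<le> m" "q j' \<in> final N" "q j = q j'"
      | i r where "i < k" "r < l i" "q j = p i r"
      unfolding F'_def by blast
    then show "q j \<in> final N"
    proof cases
      case 1 then show ?thesis by simp
    next
      case 2
      have a: "q j \<in> q ` {0..m}" using that by simp
      have b: "p i r \<in> (\<lambda>(i, j). p i j) ` {(i, j). i < k \<and> j < l i}"
        using 2 by (intro image_eqI[where x="(i,r)"]) auto
      have "q j \<in> q ` {0..m} \<inter> (\<lambda>(i, j). p i j) ` {(i, j). i < k \<and> j < l i}"
        using a b 2(3) by simp
      then show ?thesis using disj by simp
    qed
  qed (use that in \<open>auto simp: F'_def\<close>)
  have memp: "(p i r \<in> F') = D i r" if "i < k" "r < l i" for i r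
  proof
    assume "p i r \<in> F'"
    then consider j' where "j' \<le> m" "p i r = q j'"
      | i' r' where "i' < k" "r' < l i'" "D i' r'" "p i r = p i' r'"
      unfolding F'_def by blast
    then show "D i r"
    proof cases
      case 1
      have a: "q j' \<in> q ` {0..m}" using 1 by simp
      have b: "p i r \<in> (\<lambda>(i, j). p i j) ` {(i, j). i < k \<and> j < l i}"
        using that by (intro image_eqI[where x="(i,r)"]) auto
      have "q j' \<in> q ` {0..m} \<inter> (\<lambda>(i, j). p i j) ` {(i, j). i < k \<and> j < l i}"
        using a b 1(2) by simp
      then show ?thesis using disj by simp
    next
      case 2
      then have "(i, r) = (i', r')" using inj_onD[OF injp, of "(i,r)" "(i',r')"] that by simp
      then show ?thesis using 2 by simp
    qed
  qed (use that in \<open>auto simp: F'_def\<close>)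
  have rN': "reach N' s w = reach N s w" for s w
    by (rule reach_cong) (simp add: N'_def)
  define G where "G n = (if n \<le> m then q n \<in> final N else Pp (n - Suc m))" for n
  have Lmem: "(w \<in> L) = G (length w)" for w
  proof -
    have "L = state_lang N (q 0)" using assms(2) ini unfolding lang_def by simp
    then show ?thesis unfolding state_lang_def G_def Pp_def using R2[of 0 w] by auto
  qed
  have SLq: "state_lang N' (q j) = {w. G (j + length w)}" if "j \<le> m" for j
  proof -
    have "(reach N' (q j) w \<inter> F' \<noteq> {}) = G (j + length w)" for w
    proof (cases "j + length w \<le> m")
      case True then show ?thesis using R2[OF that, of w] memq rN' G_def by simp
    next
      case False
      have "(reach N' (q j) w \<inter> F' \<noteq> {}) = (\<exists>i<k. D i ((j + length w - Suc m) mod l i))"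
        using R2[OF that, of w] False rN' memp l1 by (auto simp: Suc_le_eq)
      then show ?thesis using DP False G_def by simp
    qed
    then show ?thesis unfolding state_lang_def by (simp add: N'_def)
  qed
  have SLp: "state_lang N' (p i j) = {w. D i (j + length w)}" if "i < k" "j < l i" for i j
  proof -
    have "(reach N' (p i j) w \<inter> F' \<noteq> {}) = D i (j + length w)" for w
    proof -
      have "(j + length w) mod l i < l i" using l1 that by (simp add: Suc_le_eq)
      then show ?thesis using R1[OF that, of w] rN' memp[OF that(1)] Dmod by auto
    qed
    then show ?thesis unfolding state_lang_def by (simp add: N'_def)
  qed
  have sub: "subatomic L N'"
    unfolding subatomic_def
  proof
    have F'sub: "F' \<subseteq> states N"
    proof
      fix x assume "x \<in> F'"
      then consider j where "j \<le> m" "x = q j" | i r where "i < k" "r < l i" "x = p i r"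
        unfolding F'_def by blast
      then show "x \<in> states N"
      proof cases
        case 1 then show ?thesis unfolding st by simp
      next
        case 2 then show ?thesis unfolding st by (intro UnI2 image_eqI[where x="(i,r)"]) auto
      qed
    qed
    show "wf_nfa N'" using wf F'sub unfolding wf_nfa_def N'_def by simp
    show "\<forall>s\<in>states N'. state_lang N' s \<in> deriv_algebra L"
    proof
      fix s assume "s \<in> states N'"
      then have "s \<in> q ` {0..m} \<union> (\<lambda>(i, j). p i j) ` {(i, j). i < k \<and> j < l i}"
        using st by (simp add: N'_def)
      then consider j where "j \<le> m" "s = q j" | i j where "i < k" "j < l i" "s = p i j"
        by auto
      then show "state_lang N' s \<in> deriv_algebra L"
      proof cases
        case 1
        have "{w. replicate j () @ w @ [] \<in> L} \<in> deriv_algebra L" by (rule deriv_algebra.deriv)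
        moreover have "{w. replicate j () @ w @ [] \<in> L} = {w. G (j + length w)}"
          using Lmem by simp
        ultimately show ?thesis using 1 SLq by simp
      next
        case 2
        have "(\<Inter>t\<in>{..<K}. {w. replicate (Suc m + j + t * l i) () @ w @ [] \<in> L}) \<in> deriv_algebra L"
          by (rule da_INT) (rule deriv_algebra.deriv)
        moreover have "(\<Inter>t\<in>{..<K}. {w. replicate (Suc m + j + t * l i) () @ w @ [] \<in> L})
            = {w. D i (j + length w)}"
          using Lmem unfolding Dall G_def by (auto simp: algebra_simps)
        ultimately show ?thesis using 2 SLp by simp
      qed
    qed
  qed
  have "lang N' = L"
  proof -
    have "lang N' = state_lang N' (q 0)" using ini unfolding lang_def N'_def by simp
    then show ?thesis using SLq[of 0] Lmem by auto
  qed
  then have "nsyn L \<le> card (states N')" using nsyn_le[OF sub] by simp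
  then show ?thesis by (simp add: N'_def)
qed

end
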